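(* Let $q$ be a prime power, $m\ge2$, and $\Phi(x)=\sum_{i=0}^{2m}c_ix^{q^i}\in\mathbb{F}_q[x]$ with $c_{2m}=1$, $c_i=-c_{2m-i}$ for $0\le i\le m$, and $c_m=0$. Then there is a monic polynomial $f\in\mathbb{F}_q[x]$ of degree $q^{m-1}(q^m+1)$ such that $f^q-f=x^{q^m}\Phi(x)$. This $f$ is unique if we require $f(0)=0$. The powers of $x$ occurring in $f$ with nonzero coefficient all have the form $x^{q^i+q^j}$ for non-negative integers $i,j$. *)

theory Defs
  imports "HOL-Computational_Algebra.Polynomial" "HOL-Library.Cardinality"
begin

definition Phi :: "nat \<Rightarrow> nat \<Rightarrow> (nat \<Rightarrow> 'a::{finite,field}) \<Rightarrow> 'a poly" where
  "Phi q m c = (\<Sum>i\<le>2*m. monom (c i) (q ^ i))"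

end

theory Submission
  imports Defs
begin

lemma ff_pow_card:
  fixes x :: "'a :: {finite,field}"
  shows "x ^ CARD('a) = x"
proof (cases "x = 0")
  case False
  have "x * (\<Prod>y\<in>UNIV-{0}. x * y) = x * x ^ (card (UNIV :: 'a set) - 1) * \<Prod>(UNIV-{0})"
    by (simp add: prod.distrib mult_ac)
  also have "x * x ^ (card (UNIV :: 'a set) - 1) = x ^ Suc (card (UNIV :: 'a set) - 1)"
    by (subst power_Suc) auto
  also have "Suc (card (UNIV :: 'a set) - 1) = card (UNIV :: 'a set)"
    using finite_UNIV_card_ge_0[where ?'a = 'a] by simp
  also have "(\<Prod>y\<in>UNIV-{0}. x * y) = (\<Prod>y\<in>UNIV-{0}. y)"
    by (rule prod.reindex_bij_witness[of _ "\<lambda>y. y / x" "\<lambda>y. x * y"]) (use False in auto)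
  finally show ?thesis
    by simp
qed (use finite_UNIV_card_ge_0[where ?'a = 'a] in auto)

lemma ff_card_ge2: "CARD('a :: {finite,field}) \<ge> 2"
proof -
  have "{0, 1::'a} \<subseteq> UNIV" by simp
  hence "card {0,1::'a} \<le> CARD('a)" by (intro card_mono) auto
  thus ?thesis by simp
qed

lemma ff_choose_zero:
  assumes "0 < k" "k < CARD('a :: {finite,field})"
  shows "of_nat (CARD('a) choose k) = (0::'a)"
proof -
  let ?q = "CARD('a)"
  define P :: "'a poly" where "P = (\<Sum>j\<in>{1..<?q}. monom (of_nat (?q choose j)) j)"
  have ev: "poly P a = 0" for a :: 'a
  proof -
    have "(a + 1) ^ ?q = (\<Sum>j\<le>?q. of_nat (?q choose j) * a ^ j * 1 ^ (?q - j))"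
      by (rule binomial_ring)
    also have "{..?q} = insert 0 (insert ?q {1..<?q})" using ff_card_ge2[where 'a='a] by auto
    also have "(\<Sum>j\<in>insert 0 (insert ?q {1..<?q}). of_nat (?q choose j) * a ^ j * 1 ^ (?q - j))
        = 1 + (a ^ ?q + (\<Sum>j\<in>{1..<?q}. of_nat (?q choose j) * a ^ j))"
      using ff_card_ge2[where 'a='a] by simp
    finally have "(a+1)^?q = 1 + (a ^ ?q + poly P a)"
      by (simp add: P_def poly_sum poly_monom)
    thus ?thesis by (simp add: ff_pow_card)
  qed
  have "P = 0"
  proof (rule ccontr)
    assume "P \<noteq> 0"
    hence "card {x. poly P x = 0} \<le> degree P" by (rule card_poly_roots_bound)
    moreover have "{x. poly P x = 0} = UNIV" using ev by auto
    moreover have "degree P \<le> ?q - 1" unfolding P_def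
      by (intro degree_sum_le) (auto intro: order.trans[OF degree_monom_le])
    ultimately show False using ff_card_ge2[where 'a='a] by simp
  qed
  hence "coeff P k = 0" by simp
  moreover have "coeff P k = of_nat (?q choose k)"
    unfolding P_def coeff_sum using assms by (simp add: coeff_monom)
  ultimately show ?thesis by simp
qed

lemma ff_poly_add_pow:
  fixes x y :: "'a :: {finite,field} poly"
  shows "(x + y) ^ CARD('a) = x ^ CARD('a) + y ^ CARD('a)"
proof -
  let ?q = "CARD('a)"
  have "(x + y) ^ ?q = (\<Sum>j\<le>?q. of_nat (?q choose j) * x ^ j * y ^ (?q - j))"
    by (rule binomial_ring)
  also have "{..?q} = insert 0 (insert ?q {1..<?q})" using ff_card_ge2[where 'a='a] by auto
  also have "(\<Sum>j\<in>insert 0 (insert ?q {1..<?q}). of_nat (?q choose j) * x ^ j * y ^ (?q - j))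
        = y ^ ?q + (x ^ ?q + (\<Sum>j\<in>{1..<?q}. of_nat (?q choose j) * x ^ j * y ^ (?q - j)))"
    using ff_card_ge2[where 'a='a] by simp
  also have "(\<Sum>j\<in>{1..<?q}. of_nat (?q choose j) * x ^ j * y ^ (?q - j)) = 0"
    by (intro sum.neutral) (auto simp: of_nat_poly ff_choose_zero)
  finally show ?thesis by (simp add: add.commute)
qed

lemma ff_poly_sum_pow:
  fixes f :: "'b \<Rightarrow> 'a :: {finite,field} poly"
  shows "(sum f A) ^ CARD('a) = (\<Sum>i\<in>A. f i ^ CARD('a))"
  by (induction A rule: infinite_finite_induct)
     (auto simp: ff_poly_add_pow power_0_left)

lemma ff_poly_diff_pow:
  fixes x y :: "'a :: {finite,field} poly"
  shows "(x - y) ^ CARD('a) = x ^ CARD('a) - y ^ CARD('a)"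
proof -
  have "x ^ CARD('a) = ((x - y) + y) ^ CARD('a)" by simp
  also have "\<dots> = (x - y) ^ CARD('a) + y ^ CARD('a)" by (rule ff_poly_add_pow)
  finally show ?thesis by simp
qed

lemma ff_monom_pow:
  fixes a :: "'a :: {finite,field}"
  shows "(monom a n) ^ CARD('a) = monom a (CARD('a) * n)"
  by (simp add: monom_power ff_pow_card mult.commute)

lemma rhs_eq:
  fixes c :: "nat \<Rightarrow> 'a::{finite,field}" and m q :: nat
  assumes c_anti: "\<And>i. i \<le> m \<Longrightarrow> c i = - c (2*m - i)"
    and c_mid: "c m = 0"
  shows "monom 1 (q ^ m) * Phi q m c =
     (\<Sum>i<m. monom (c i) (q^i + q^m) - monom (c i) (q^m + q^(2*m-i)))"
proof -
  have "monom 1 (q ^ m) * Phi q m c = (\<Sum>i\<le>2*m. monom (c i) (q^i + q^m))"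
    unfolding Phi_def sum_distrib_left by (simp add: mult_monom add.commute)
  also have "{..2*m} = {..<m} \<union> ({m} \<union> {m<..2*m})" by auto
  also have "(\<Sum>i\<in>{..<m} \<union> ({m} \<union> {m<..2*m}). monom (c i) (q^i + q^m))
     = (\<Sum>i<m. monom (c i) (q^i + q^m)) + (monom (c m) (q^m+q^m) + (\<Sum>i\<in>{m<..2*m}. monom (c i) (q^i + q^m)))"
    by (subst sum.union_disjoint; auto)+
  also have "(\<Sum>i\<in>{m<..2*m}. monom (c i) (q^i + q^m)) = (\<Sum>k<m. monom (c (2*m-k)) (q^(2*m-k) + q^m))"
    by (rule sum.reindex_bij_witness[of _ "\<lambda>i. 2*m - i" "\<lambda>i. 2*m - i"]) auto
  also have "\<dots> = (\<Sum>k<m. - monom (c k) (q^m + q^(2*m-k)))"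
  proof (rule sum.cong[OF refl])
    fix k assume "k \<in> {..<m}"
    hence "c (2*m-k) = - c k" using c_anti[of k] by simp
    thus "monom (c (2*m-k)) (q^(2*m-k) + q^m) = - monom (c k) (q^m + q^(2*m-k))"
      by (simp add: add.commute minus_monom)
  qed
  finally show ?thesis using c_mid by (simp add: sum_subtractf sum_negf)
qed

definition fsol :: "nat \<Rightarrow> nat \<Rightarrow> (nat \<Rightarrow> 'a::{finite,field}) \<Rightarrow> 'a poly" where
  "fsol q m c = (\<Sum>i<m. \<Sum>j<m-i. monom (- c i) (q^(i+j) + q^(m+j)))"

lemma fsol_eq:
  fixes c :: "nat \<Rightarrow> 'a::{finite,field}" and m q :: nat
  assumes q: "q = CARD('a)"
  shows "fsol q m c ^ q - fsol q m c =
     (\<Sum>i<m. monom (c i) (q^i + q^m) - monom (c i) (q^m + q^(2*m-i)))"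
proof -
  have "fsol q m c ^ q = (\<Sum>i<m. \<Sum>j<m-i. monom (- c i) (q^(i+Suc j) + q^(m+Suc j)))"
    unfolding fsol_def q ff_poly_sum_pow ff_monom_pow
    by (simp add: algebra_simps)
  hence "fsol q m c ^ q - fsol q m c =
     (\<Sum>i<m. \<Sum>j<m-i. monom (- c i) (q^(i+Suc j) + q^(m+Suc j)) - monom (- c i) (q^(i+j) + q^(m+j)))"
    unfolding fsol_def by (simp add: sum_subtractf)
  also have "\<dots> = (\<Sum>i<m. monom (- c i) (q^(i+(m-i)) + q^(m+(m-i))) - monom (- c i) (q^(i+0) + q^(m+0)))"
    by (subst sum_lessThan_telescope[where f = "\<lambda>j. monom (- c _) (q^(_+j) + q^(m+j))"]) (rule refl)
  also have "\<dots> = (\<Sum>i<m. monom (c i) (q^i + q^m) - monom (c i) (q^m + q^(2*m-i)))"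
  proof (rule sum.cong[OF refl])
    fix i assume "i \<in> {..<m}"
    hence "i + (m-i) = m" "m + (m-i) = 2*m-i" by auto
    thus "monom (- c i) (q^(i+(m-i)) + q^(m+(m-i))) - monom (- c i) (q^(i+0) + q^(m+0))
       = monom (c i) (q^i + q^m) - monom (c i) (q^m + q^(2*m-i))"
      by (simp flip: minus_monom add: add.commute)
  qed
  finally show ?thesis .
qed

lemma exps_bound:
  fixes q m i j :: nat
  assumes "q \<ge> 2" "i < m" "j < m - i"
  shows "q^(i+j) + q^(m+j) \<le> q^(m-1) + q^(2*m-1)
     \<and> (q^(i+j) + q^(m+j) = q^(m-1) + q^(2*m-1) \<longrightarrow> i = 0 \<and> j = m - 1)"
proof (cases "j = m - 1")
  case True
  with assms have "i = 0" by auto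
  with True assms show ?thesis by (simp add: mult_2)
next
  case False
  with assms have j: "j \<le> m - 2" "m \<ge> 1" by auto
  have "q^(i+j) \<le> q^(m-1)" using assms by (intro power_increasing) auto
  moreover have "m + j < 2*m-1" using assms j False by linarith
  hence "q^(m+j) < q^(2*m-1)" using assms by (intro power_strict_increasing) auto
  ultimately show ?thesis by linarith
qed

lemma coeff_fsol:
  "coeff (fsol q m c) k = (\<Sum>i<m. \<Sum>j<m-i. if q^(i+j) + q^(m+j) = k then - c i else 0)"
  unfolding fsol_def coeff_sum by simp

lemma uniq:
  fixes f g :: "'a::{finite,field} poly"
  assumes "g ^ CARD('a) - g = f ^ CARD('a) - f" "poly g 0 = poly f 0"
  shows "g = f"
proof -
  let ?q = "CARD('a)"
  define h where "h = g - f"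
  have hq: "h ^ ?q = h" unfolding h_def ff_poly_diff_pow using assms(1)
    by (simp add: algebra_simps)
  have "degree h = 0"
  proof (rule ccontr)
    assume "degree h \<noteq> 0"
    hence "h \<noteq> 0" by auto
    hence "degree (h ^ ?q) = ?q * degree h" by (rule degree_power_eq)
    with hq have "degree h = ?q * degree h" by simp
    with \<open>degree h \<noteq> 0\<close> ff_card_ge2[where 'a='a] show False by simp
  qed
  then obtain a where "h = [:a:]" by (metis degree_eq_zeroE)
  moreover have "poly h 0 = 0" using assms(2) by (simp add: h_def)
  ultimately have "h = 0" by simp
  thus ?thesis by (simp add: h_def)
qed

theorem lemma4p5:
  fixes c :: "nat \<Rightarrow> 'a::{finite,field}" and m q :: nat
  assumes q: "q = CARD('a)"
    and m: "m \<ge> 2"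
    and c_top: "c (2*m) = 1"
    and c_anti: "\<And>i. i \<le> m \<Longrightarrow> c i = - c (2*m - i)"
    and c_mid: "c m = 0"
  shows "\<exists>f :: 'a poly.
           lead_coeff f = 1
         \<and> degree f = q ^ (m - 1) * (q ^ m + 1)
         \<and> f ^ q - f = monom 1 (q ^ m) * Phi q m c
         \<and> poly f 0 = 0
         \<and> (\<forall>g :: 'a poly. g ^ q - g = monom 1 (q ^ m) * Phi q m c \<and> poly g 0 = 0 \<longrightarrow> g = f)
         \<and> (\<forall>k. coeff f k \<noteq> 0 \<longrightarrow> (\<exists>i j. k = q ^ i + q ^ j))"
proof -
  define f where "f = fsol q m c"
  define N where "N = q ^ (m - 1) * (q ^ m + 1)"
  have q2: "q \<ge> 2" using q ff_card_ge2[where 'a='a] by simp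
  have N: "N = q^(m-1) + q^(2*m-1)"
  proof -
    have "m - 1 + m = 2*m-1" using m by simp
    hence "q^(m-1) * q^m = q^(2*m-1)" by (metis power_add)
    thus ?thesis unfolding N_def by (simp add: algebra_simps)
  qed
  have c0: "c 0 = -1" proof - have "c 0 = - c (2*m - 0)" by (rule c_anti) simp
    thus ?thesis using c_top by simp qed
  have eq: "f ^ q - f = monom 1 (q ^ m) * Phi q m c"
    unfolding f_def fsol_eq[OF q] by (rule sym, rule rhs_eq) (rule c_anti, assumption, rule c_mid)
  have hi: "coeff f k = 0" if "k > N" for k
    unfolding f_def coeff_fsol
  proof (intro sum.neutral ballI)
    fix i j assume "i \<in> {..<m}" "j \<in> {..<m-i}"
    hence "q^(i+j) + q^(m+j) \<le> N" using exps_bound[OF q2, of i m j] N by auto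
    thus "(if q^(i+j) + q^(m+j) = k then - c i else 0) = 0" using that by auto
  qed
  have top: "coeff f N = 1"
  proof -
    have "coeff f N = (\<Sum>i<m. \<Sum>j<m-i. if i = 0 \<and> j = m - 1 then - c i else 0)"
      unfolding f_def coeff_fsol
    proof (intro sum.cong refl)
      fix i j assume "i \<in> {..<m}" "j \<in> {..<m-i}"
      hence "i < m" "j < m - i" by auto
      from exps_bound[OF q2 this] N m
      show "(if q^(i+j) + q^(m+j) = N then - c i else 0) = (if i = 0 \<and> j = m - 1 then - c i else 0)"
        by (auto simp: mult_2)
    qed
    also have "\<dots> = (\<Sum>i<m. if i = 0 then - c 0 else 0)"
      by (intro sum.cong refl) (use m in auto)
    also have "\<dots> = 1" using m c0 by simp
    finally show ?thesis .
  qed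
  have degf: "degree f = N"
  proof (rule antisym)
    show "degree f \<le> N" by (rule degree_le) (use hi in auto)
    show "N \<le> degree f" by (rule le_degree) (use top in auto)
  qed
  have p0: "poly f 0 = 0"
  proof -
    have "poly (monom (- c i) (q^(i+j) + q^(m+j))) 0 = 0" for i j
    proof -
      have "q^(i+j) + q^(m+j) > 0" using q2 by simp
      thus ?thesis using q2 by (simp add: poly_monom power_0_left)
    qed
    thus ?thesis unfolding f_def fsol_def poly_sum by simp
  qed
  have un: "\<forall>g :: 'a poly. g ^ q - g = monom 1 (q ^ m) * Phi q m c \<and> poly g 0 = 0 \<longrightarrow> g = f"
  proof (intro allI impI)
    fix g :: "'a poly" assume "g ^ q - g = monom 1 (q ^ m) * Phi q m c \<and> poly g 0 = 0"
    hence "g ^ CARD('a) - g = f ^ CARD('a) - f" "poly g 0 = poly f 0" using eq p0 q by simp_all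
    thus "g = f" by (rule uniq)
  qed
  have ex: "\<forall>k. coeff f k \<noteq> 0 \<longrightarrow> (\<exists>i j. k = q ^ i + q ^ j)"
  proof (intro allI impI)
    fix k assume "coeff f k \<noteq> 0"
    show "\<exists>i j. k = q ^ i + q ^ j"
    proof (rule ccontr)
      assume nk: "\<not> (\<exists>i j. k = q ^ i + q ^ j)"
      have "coeff f k = 0" unfolding f_def coeff_fsol
        by (intro sum.neutral ballI) (use nk in auto)
      with \<open>coeff f k \<noteq> 0\<close> show False by simp
    qed
  qed
  show ?thesis
  proof (rule exI[of _ f], intro conjI)
    show "lead_coeff f = 1" using degf top by simp
    show "degree f = q ^ (m - 1) * (q ^ m + 1)" using degf N_def by simp
  qed (fact eq p0 un ex)+
qed

end
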